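(* Let $n,k,d$ be positive integers with $k \le d < n$, and let $\alpha>0$. For every integer $i$ with $1 \le i \le k$, $$ C^{\text{exact}}_{n,k,d}\!\left(\alpha,\frac{(d-k+i)\alpha}{d-k+1}\right) \;\geq\; \frac{n i \alpha}{n-k+i}. $$
   Context: A distributed storage system (regenerating code) with parameters $(n,k,d)$, node size $\alpha$ and total repair bandwidth $\gamma$ stores a file on $n$ nodes, each node storing an amount $\alpha$ of information, such that the file can be reconstructed from the contents of any $k$ nodes, and any lost node can be repaired by contacting any $d$ of the remaining nodes, each of which transmits an amount $\beta=\gamma/d$ to the new node. The code has exact repair if the repaired node stores exactly the same content as the lost node. $C^{\text{exact}}_{n,k,d}(\alpha,\gamma)$ denotes the capacity (maximum storable file size) of exact-repair codes with these parameters. Amounts of information are treated as arbitrarily divisible, so capacities are positively homogeneous: $C^{\text{exact}}_{n,k,d}(c\alpha,c\gamma)=c\,C^{\text{exact}}_{n,k,d}(\alpha,\gamma)$ for $c>0$. *)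

theory Defs
  imports Complex_Main
begin

text \<open>Zero-error exact-repair regenerating code with nodes 0..n-1 storing a file
  x from the file set {..<N}. Node j stores f j x; the alphabet actually used by
  node j has at most 2 powr alpha symbols (alpha bits). For a failed node j and any
  helper set H of d other nodes, helper h sends phi j H h (f h x), using at most
  2 powr beta distinct messages (beta bits); the messages determine f j x exactly.\<close>

definition exact_code ::
  "nat \<Rightarrow> nat \<Rightarrow> nat \<Rightarrow> real \<Rightarrow> real \<Rightarrow> nat \<Rightarrow> (nat \<Rightarrow> nat \<Rightarrow> nat)
   \<Rightarrow> (nat \<Rightarrow> nat set \<Rightarrow> nat \<Rightarrow> nat \<Rightarrow> nat) \<Rightarrow> bool" where
  "exact_code n k d alpha beta N f phi \<longleftrightarrow>
     (\<forall>j<n. real (card (f j ` {..<N})) \<le> 2 powr alpha) \<and>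
     (\<forall>K. K \<subseteq> {..<n} \<and> card K = k \<longrightarrow>
        (\<forall>x<N. \<forall>y<N. (\<forall>i\<in>K. f i x = f i y) \<longrightarrow> x = y)) \<and>
     (\<forall>j<n. \<forall>H. H \<subseteq> {..<n} - {j} \<and> card H = d \<longrightarrow>
        (\<forall>h\<in>H. real (card (phi j H h ` f h ` {..<N})) \<le> 2 powr beta) \<and>
        (\<forall>x<N. \<forall>y<N. (\<forall>h\<in>H. phi j H h (f h x) = phi j H h (f h y)) \<longrightarrow> f j x = f j y))"

text \<open>Capacity: information is arbitrarily divisible, so we normalise by a scale t > 0:
  the best file size (in bits) of a code with node size t*alpha and per-helper
  bandwidth t*gamma/d, divided by t, supremised over t.\<close>

definition C_exact :: "nat \<Rightarrow> nat \<Rightarrow> nat \<Rightarrow> real \<Rightarrow> real \<Rightarrow> real" where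
  "C_exact n k d alpha gamma =
     (SUP t\<in>{0<..}. Sup {log 2 (real N) | N f phi.
         N \<ge> 1 \<and> exact_code n k d (t * alpha) (t * gamma / real d) N f phi} / t)"

end

theory Submission
  imports Defs "HOL-Computational_Algebra.Computational_Algebra" "HOL-Number_Theory.Cong"
    "HOL-Library.FuncSet" "HOL-Library.Countable_Set"
begin


lemma vdm:
  fixes p :: int and g z :: "'i \<Rightarrow> int"
  assumes pr: "prime p" and fin: "finite I" and cI: "card I \<le> T"
    and dist: "\<And>i i'. i\<in>I \<Longrightarrow> i'\<in>I \<Longrightarrow> i \<noteq> i' \<Longrightarrow> \<not> p dvd (g i - g i')"
    and eq: "\<And>t. t < T \<Longrightarrow> p dvd (\<Sum>i\<in>I. g i ^ t * z i)"
    and i0: "i0 \<in> I"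
  shows "p dvd z i0"
proof -
  define P where "P = (\<Prod>i\<in>I-{i0}. [:- g i, 1:])"
  have "degree P = (\<Sum>i\<in>I-{i0}. degree [:- g i, 1:])"
    unfolding P_def by (rule degree_prod_eq_sum_degree) auto
  also have "\<dots> = card (I - {i0})" by simp
  finally have degP: "degree P < T" using cI i0 fin
    by (metis card_Diff1_less le_trans not_le)
  have "p dvd (\<Sum>t\<le>degree P. coeff P t * (\<Sum>i\<in>I. g i ^ t * z i))"
    using degP eq by (intro dvd_sum) auto
  also have "(\<Sum>t\<le>degree P. coeff P t * (\<Sum>i\<in>I. g i ^ t * z i))
     = (\<Sum>i\<in>I. z i * poly P (g i))"
    by (simp add: poly_altdef sum_distrib_left sum_distrib_right sum.swap[of _ I] algebra_simps)
  also have "\<dots> = z i0 * poly P (g i0) + (\<Sum>i\<in>I-{i0}. z i * poly P (g i))"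
    using fin i0 by (simp add: sum.remove)
  also have "(\<Sum>i\<in>I-{i0}. z i * poly P (g i)) = 0"
  proof (rule sum.neutral, rule ballI)
    fix i assume "i \<in> I - {i0}"
    then have "poly P (g i) = 0" unfolding P_def poly_prod using fin
      by (intro prod_zero) auto
    then show "z i * poly P (g i) = 0" by simp
  qed
  finally have "p dvd z i0 * poly P (g i0)" by simp
  moreover have "\<not> p dvd poly P (g i0)"
  proof
    assume "p dvd poly P (g i0)"
    then have "p dvd (\<Prod>i\<in>I-{i0}. g i0 - g i)" unfolding P_def poly_prod by simp
    then obtain i where "i \<in> I - {i0}" "p dvd g i0 - g i"
      using prime_dvd_prod_iff[OF _ pr, of "I-{i0}" "\<lambda>i. g i0 - g i"] fin by auto
    then show False using dist i0 by auto
  qed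
  ultimately show ?thesis using pr prime_dvd_mult_iff by blast
qed




lemma bij_betw_filter:
  assumes "bij_betw f A B" shows "bij_betw f {a\<in>A. P (f a)} {b\<in>B. P b}"
  using assms unfolding bij_betw_def
  by (auto intro: inj_on_subset)


definition rk :: "nat set \<Rightarrow> nat \<Rightarrow> nat" where
  "rk S h = card {h'\<in>S. h' < h}"

lemma rk_bij:
  assumes "finite S" shows "bij_betw (rk S) S {..<card S}"
proof -
  have lt: "rk S h < card S" if "h \<in> S" for h
    unfolding rk_def using that assms by (intro psubset_card_mono) auto
  have mono: "rk S h < rk S h'" if "h \<in> S" "h < h'" for h h'
    unfolding rk_def using that assms by (intro psubset_card_mono) auto
  have inj: "inj_on (rk S) S"
  proof (rule inj_onI)
    fix a b assume "a \<in> S" "b \<in> S" "rk S a = rk S b"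
    then show "a = b" using mono[of a b] mono[of b a] by (metis less_irrefl nat_neq_iff)
  qed
  have "rk S ` S \<subseteq> {..<card S}" using lt by auto
  moreover have "card (rk S ` S) = card {..<card S}" using inj by (simp add: card_image)
  ultimately have "rk S ` S = {..<card S}" by (intro card_subset_eq) auto
  then show ?thesis using inj by (simp add: bij_betw_def)
qed

lemma shift_bij:
  fixes x c :: nat
  assumes "0 < x" shows "bij_betw (\<lambda>v. (v + c) mod x) {..<x} {..<x}"
proof -
  have inj: "inj_on (\<lambda>v. (v + c) mod x) {..<x}"
  proof (rule inj_onI)
    fix a b assume ab: "a \<in> {..<x}" "b \<in> {..<x}" "(a + c) mod x = (b + c) mod x"
    then have "[a + c = b + c] (mod x)" by (simp add: cong_def)
    then have "[a = b] (mod x)" by (simp add: cong_add_rcancel_nat)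
    then have "a mod x = b mod x" by (simp add: cong_def)
    then show "a = b" using ab by simp
  qed
  have "(\<lambda>v. (v + c) mod x) ` {..<x} \<subseteq> {..<x}" using assms by auto
  moreover have "card ((\<lambda>v. (v + c) mod x) ` {..<x}) = card {..<x}" using inj by (simp add: card_image)
  ultimately show ?thesis using inj by (simp add: bij_betw_def card_subset_eq)
qed

lemma card_shift_lt:
  fixes x c e :: nat
  assumes "0 < x" "e \<le> x" shows "card {v\<in>{..<x}. (v + c) mod x < e} = e"
proof -
  have "card {v\<in>{..<x}. (v + c) mod x < e} = card {w\<in>{..<x}. w < e}"
    using bij_betw_filter[OF shift_bij[OF assms(1), of c], of "\<lambda>w. w < e"]
    by (rule bij_betw_same_card)
  also have "{w\<in>{..<x}. w < e} = {..<e}" using assms by auto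
  finally show ?thesis by simp
qed

lemma card_window:
  fixes x e q rho :: nat
  assumes "0 < x" "e \<le> x" shows "card {c\<in>{..<x*q}. (rho + c) mod x < e} = q * e"
proof (induction q)
  case 0 then show ?case by simp
next
  case (Suc q)
  have split: "{c\<in>{..<x*Suc q}. (rho + c) mod x < e} =
     {c\<in>{..<x*q}. (rho + c) mod x < e} \<union> (\<lambda>v. x*q + v) ` {v\<in>{..<x}. (v + rho) mod x < e}"
  proof (rule set_eqI, rule iffI)
    fix c assume "c \<in> {c\<in>{..<x*Suc q}. (rho + c) mod x < e}"
    then have c: "c < x*q + x" "(rho + c) mod x < e" by auto
    show "c \<in> {c\<in>{..<x*q}. (rho + c) mod x < e} \<union> (\<lambda>v. x*q + v) ` {v\<in>{..<x}. (v + rho) mod x < e}"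
    proof (cases "c < x*q")
      case True then show ?thesis using c by auto
    next
      case False
      then have "c = x*q + (c - x*q)" "c - x*q < x" using c by auto
      moreover have "((c - x*q) + rho) mod x = (rho + c) mod x"
      proof -
        have "rho + c = ((c - x*q) + rho) + q*x" using \<open>c = x*q + (c - x*q)\<close> by (simp add: mult.commute)
        then show ?thesis by (simp only: mod_mult_self1)
      qed
      ultimately show ?thesis using c by (auto intro!: image_eqI[of c _ "c - x*q"])
    qed
  next
    fix c assume "c \<in> {c\<in>{..<x*q}. (rho + c) mod x < e} \<union> (\<lambda>v. x*q + v) ` {v\<in>{..<x}. (v + rho) mod x < e}"
    then show "c \<in> {c\<in>{..<x*Suc q}. (rho + c) mod x < e}"
    proof
      assume "c \<in> {c\<in>{..<x*q}. (rho + c) mod x < e}" then show ?thesis by auto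
    next
      assume "c \<in> (\<lambda>v. x*q + v) ` {v\<in>{..<x}. (v + rho) mod x < e}"
      then obtain v where "v < x" "(v + rho) mod x < e" "c = x*q + v" by auto
      moreover have "(rho + (x*q + v)) mod x = (v + rho) mod x"
      proof -
        have "rho + (x*q + v) = (v + rho) + q*x" by (simp add: mult.commute)
        then show ?thesis by (simp only: mod_mult_self1)
      qed
      ultimately show ?thesis by auto
    qed
  qed
  have "card {c\<in>{..<x*Suc q}. (rho + c) mod x < e} =
     card {c\<in>{..<x*q}. (rho + c) mod x < e} + card ((\<lambda>v. x*q + v) ` {v\<in>{..<x}. (v + rho) mod x < e})"
    unfolding split by (rule card_Un_disjoint) auto
  also have "card ((\<lambda>v. x*q + v) ` {v\<in>{..<x}. (v + rho) mod x < e}) = e"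
    using card_shift_lt[OF assms, of rho] by (subst card_image) auto
  finally show ?case using Suc by simp
qed

lemma card_rk_window:
  assumes "finite S" "S \<noteq> {}" "e \<le> card S"
  shows "card {h\<in>S. (rk S h + c) mod card S < e} = e"
proof -
  have x: "0 < card S" using assms by auto
  have "card {h\<in>S. (rk S h + c) mod card S < e} = card {v\<in>{..<card S}. (v + c) mod card S < e}"
    using bij_betw_filter[OF rk_bij[OF assms(1)], of "\<lambda>v. (v + c) mod card S < e"]
    by (rule bij_betw_same_card)
  also have "\<dots> = e" by (rule card_shift_lt[OF x assms(3)])
  finally show ?thesis .
qed




definition Lay :: "nat \<Rightarrow> nat \<Rightarrow> nat set set" where
  "Lay n r = {R. R \<subseteq> {..<n} \<and> card R = r}"

definition tr :: "nat \<Rightarrow> nat \<Rightarrow> nat \<Rightarrow> nat" where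
  "tr a b x = (if x = a then b else if x = b then a else x)"

lemma tr_tr[simp]: "tr a b (tr a b x) = x" by (simp add: tr_def)
lemma inj_tr: "inj (tr a b)" by (metis injI tr_tr)
lemma tr_a[simp]: "tr a b a = b" by (simp add: tr_def)
lemma tr_b[simp]: "tr a b b = a" by (simp add: tr_def)

lemma finite_Lay[simp]: "finite (Lay n r)"
  unfolding Lay_def by (rule finite_subset[of _ "Pow {..<n}"]) auto

lemma Lay_fin: "R \<in> Lay n r \<Longrightarrow> finite R"
  unfolding Lay_def using finite_subset by auto

lemma tr_img_img[simp]: "tr a b ` tr a b ` R = R"
  by (simp add: image_comp comp_def)

lemma tr_Lay:
  assumes "a < n" "b < n" "R \<in> Lay n r" shows "tr a b ` R \<in> Lay n r"
proof -
  have "tr a b ` R \<subseteq> {..<n}" using assms unfolding Lay_def tr_def by auto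
  moreover have "card (tr a b ` R) = card R" by (rule card_image[OF inj_on_subset[OF inj_tr subset_UNIV]])
  ultimately show ?thesis using assms unfolding Lay_def by auto
qed

lemma sym_sum:
  fixes w :: "nat set \<Rightarrow> real"
  assumes ab: "a < n" "b < n"
    and inv: "\<And>R. R \<in> Lay n r \<Longrightarrow> w (tr a b ` R) = w R"
  shows "(\<Sum>R\<in>{R\<in>Lay n r. a\<in>R}. w R) = (\<Sum>R\<in>{R\<in>Lay n r. b\<in>R}. w R)"
proof -
  have bij: "bij_betw (image (tr a b)) {R\<in>Lay n r. a\<in>R} {R\<in>Lay n r. b\<in>R}"
  proof (rule bij_betw_byWitness[where f'="image (tr a b)"])
    show "\<forall>R\<in>{R \<in> Lay n r. a \<in> R}. tr a b ` tr a b ` R = R" by simp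
    show "\<forall>R\<in>{R \<in> Lay n r. b \<in> R}. tr a b ` tr a b ` R = R" by simp
    show "image (tr a b) ` {R \<in> Lay n r. a \<in> R} \<subseteq> {R \<in> Lay n r. b \<in> R}"
    proof
      fix S assume "S \<in> image (tr a b) ` {R \<in> Lay n r. a \<in> R}"
      then obtain R where R: "R \<in> Lay n r" "a \<in> R" "S = tr a b ` R" by blast
      have "b \<in> tr a b ` R" using R(2) by (rule rev_image_eqI) simp
      then show "S \<in> {R \<in> Lay n r. b \<in> R}" using tr_Lay[OF ab R(1)] R(3) by simp
    qed
    show "image (tr a b) ` {R \<in> Lay n r. b \<in> R} \<subseteq> {R \<in> Lay n r. a \<in> R}"
    proof
      fix S assume "S \<in> image (tr a b) ` {R \<in> Lay n r. b \<in> R}"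
      then obtain R where R: "R \<in> Lay n r" "b \<in> R" "S = tr a b ` R" by blast
      have "a \<in> tr a b ` R" using R(2) by (rule rev_image_eqI) simp
      then show "S \<in> {R \<in> Lay n r. a \<in> R}" using tr_Lay[OF ab R(1)] R(3) by simp
    qed
  qed
  have "(\<Sum>R\<in>{R\<in>Lay n r. b\<in>R}. w R) = (\<Sum>R\<in>{R\<in>Lay n r. a\<in>R}. w (tr a b ` R))"
    using sum.reindex_bij_betw[OF bij, of w] by simp
  also have "\<dots> = (\<Sum>R\<in>{R\<in>Lay n r. a\<in>R}. w R)" using inv by (intro sum.cong) auto
  finally show ?thesis by simp
qed

lemma double_count:
  fixes w :: "nat set \<Rightarrow> real"
  assumes "finite U" "finite L"
  shows "(\<Sum>j\<in>U. \<Sum>R\<in>{R\<in>L. j\<in>R}. w R) = (\<Sum>R\<in>L. real (card (R \<inter> U)) * w R)"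
proof -
  have "(\<Sum>j\<in>U. \<Sum>R\<in>{R\<in>L. j\<in>R}. w R) = (\<Sum>j\<in>U. \<Sum>R\<in>L. if j \<in> R then w R else 0)"
    by (rule sum.cong[OF refl], rule sum.inter_filter[OF assms(2)])
  also have "\<dots> = (\<Sum>R\<in>L. \<Sum>j\<in>U. if j \<in> R then w R else 0)" by (rule sum.swap)
  also have "\<dots> = (\<Sum>R\<in>L. real (card (R \<inter> U)) * w R)"
  proof (intro sum.cong refl)
    fix R assume "R \<in> L"
    have "(\<Sum>j\<in>U. if j \<in> R then w R else 0) = (\<Sum>j\<in>U \<inter> R. w R)"
      using assms by (simp add: sum.inter_restrict[symmetric] Int_commute)
    also have "\<dots> = real (card (R \<inter> U)) * w R" by (simp add: Int_commute)
    finally show "(\<Sum>j\<in>U. if j \<in> R then w R else 0) = real (card (R \<inter> U)) * w R" .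
  qed
  finally show ?thesis .
qed




lemma dvd_lin_mod:
  fixes P :: int
  assumes "(\<Sum>m\<in>R. h m * f m) mod P = (\<Sum>m\<in>R. h m * g m) mod P"
  shows "P dvd (\<Sum>m\<in>R. h m * ((f m - g m) mod P))"
proof -
  have "[(\<Sum>m\<in>R. h m * ((f m - g m) mod P)) = (\<Sum>m\<in>R. h m * (f m - g m))] (mod P)"
    by (intro cong_sum cong_scalar_left) (simp add: cong_def)
  also have "(\<Sum>m\<in>R. h m * (f m - g m)) = (\<Sum>m\<in>R. h m * f m) - (\<Sum>m\<in>R. h m * g m)"
    by (simp add: right_diff_distrib sum_subtractf)
  also have "[\<dots> = 0] (mod P)" using assms by (simp add: cong_def mod_diff_eq[symmetric])
  finally show ?thesis by (simp add: cong_0_iff)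
qed

lemma mod_eq_range:
  fixes P a b :: int
  assumes "a \<in> {0..<P}" "b \<in> {0..<P}" "(a - c) mod P = (b - c) mod P"
  shows "a = b"
proof -
  have "[a - c = b - c] (mod P)" using assms(3) by (simp add: cong_def)
  then have "[a - c + c = b - c + c] (mod P)" by (rule cong_add[OF _ cong_refl])
  then have "[a = b] (mod P)" by simp
  then have "a mod P = b mod P" by (simp add: cong_def)
  then show ?thesis using assms by simp
qed

lemma eq_of_dvd:
  fixes P a b :: int
  assumes "a \<in> {0..<P}" "b \<in> {0..<P}" "P dvd (a - b)"
  shows "a = b"
  using mod_eq_range[OF assms(1,2), of b] assms(3) by (simp add: dvd_eq_mod_eq_0)

locale lc =
  fixes n k d i p :: nat
  assumes k0: "0 < k" and kd: "k \<le> d" and dn: "d < n" and i1: "1 \<le> i" and ik: "i \<le> k"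
    and pp: "prime p" and pbig: "n * (d - k + 1) < p"
begin

definition "r = n - k + i"
definition "s = d - k + 1"
definition "dd = d - k + i"
definition "T = n - k"
definition M :: nat where "M = fact n"
definition "LL = Lay n r"
definition AA :: "nat set \<Rightarrow> (nat \<Rightarrow> nat) set" where "AA R = PiE R (\<lambda>_. {..<s})"
definition "lam m u = int (m * s + u)"
definition "X = Sigma LL (\<lambda>R. R \<times> ({..<M} \<times> AA R))"
definition "Xn j = Sigma {R\<in>LL. j\<in>R} (\<lambda>R. {j} \<times> ({..<M} \<times> AA R))"
definition "Y = Sigma LL (\<lambda>R. {..<T} \<times> ({..<M} \<times> AA R))"
definition P :: int where "P = int p"
definition "V = PiE X (\<lambda>_. {0..<P})"
definition "W = PiE Y (\<lambda>_. {0..<P})"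
definition "par w = (\<lambda>(R,t,c,a)\<in>Y. (\<Sum>m\<in>R. lam m (a m)^t * w (R,m,c,a)) mod P)"
definition "C = {w\<in>V. \<forall>R t c a. (R,t,c,a)\<in>Y \<longrightarrow> P dvd (\<Sum>m\<in>R. lam m (a m)^t * w (R,m,c,a))}"

lemma nums: "T + i = r" "s + (r - 1 - dd) = T" "dd \<le> r - 1" "1 \<le> s" "1 \<le> dd" "r \<le> n" "1 \<le> r"
   "dd \<le> d" "s \<le> dd"
  using k0 kd dn i1 ik unfolding T_def r_def s_def dd_def by auto

lemma P_gt: "1 < P" using pp prime_gt_1_nat unfolding P_def by simp

lemma card_AA: "finite R \<Longrightarrow> card (AA R) = s ^ card R"
  unfolding AA_def by (simp add: card_PiE)

lemma finite_AA[simp]: "finite R \<Longrightarrow> finite (AA R)"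
  unfolding AA_def by (simp add: finite_PiE)

lemma LL_fin: "R \<in> LL \<Longrightarrow> finite R" unfolding LL_def using Lay_fin by blast
lemma LL_card: "R \<in> LL \<Longrightarrow> card R = r" unfolding LL_def Lay_def by blast
lemma LL_sub: "R \<in> LL \<Longrightarrow> R \<subseteq> {..<n}" unfolding LL_def Lay_def by blast
lemma finite_LL[simp]: "finite LL" unfolding LL_def by simp

lemma finite_X[simp]: "finite X" unfolding X_def using LL_fin by (intro finite_SigmaI) auto
lemma finite_Y[simp]: "finite Y" unfolding Y_def using LL_fin by (intro finite_SigmaI) auto
lemma finite_Xn[simp]: "finite (Xn j)" unfolding Xn_def using LL_fin by (intro finite_SigmaI) auto

lemma card_X: "card X = card LL * (r * (M * s ^ r))"
proof -
  have "card X = (\<Sum>R\<in>LL. card (R \<times> ({..<M} \<times> AA R)))"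
    unfolding X_def using LL_fin by (intro card_SigmaI) auto
  also have "\<dots> = (\<Sum>R\<in>LL. r * (M * s ^ r))"
    using LL_fin LL_card by (intro sum.cong) (auto simp: card_cartesian_product card_AA)
  finally show ?thesis by simp
qed

lemma card_Y: "card Y = card LL * (T * (M * s ^ r))"
proof -
  have "card Y = (\<Sum>R\<in>LL. card ({..<T} \<times> ({..<M} \<times> AA R)))"
    unfolding Y_def using LL_fin by (intro card_SigmaI) auto
  also have "\<dots> = (\<Sum>R\<in>LL. T * (M * s ^ r))"
    using LL_fin LL_card by (intro sum.cong) (auto simp: card_cartesian_product card_AA)
  finally show ?thesis by simp
qed

lemma card_Xn: "card (Xn j) = card {R\<in>LL. j\<in>R} * (M * s ^ r)"
proof -
  have "card (Xn j) = (\<Sum>R\<in>{R\<in>LL. j\<in>R}. card ({j} \<times> ({..<M} \<times> AA R)))"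
    unfolding Xn_def using LL_fin by (intro card_SigmaI) auto
  also have "\<dots> = (\<Sum>R\<in>{R\<in>LL. j\<in>R}. M * s ^ r)"
    using LL_fin LL_card by (intro sum.cong) (auto simp: card_cartesian_product card_AA)
  finally show ?thesis by simp
qed

lemma not_dvd_small: "0 < \<bar>z\<bar> \<Longrightarrow> \<bar>z\<bar> < P \<Longrightarrow> \<not> P dvd z"
  by (metis dvd_abs_iff zdvd_imp_le zero_less_abs_iff linorder_not_le)

lemma lam_dist:
  assumes "m < n" "m' < n" "u < s" "u' < s" "(m, u) \<noteq> (m', u')"
  shows "\<not> P dvd (lam m u - lam m' u')"
proof -
  have ne: "m * s + u \<noteq> m' * s + u'"
  proof
    assume h: "m * s + u = m' * s + u'"
    have "(m * s + u) div s = m" "(m' * s + u') div s = m'" using assms by auto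
    moreover have "(m * s + u) mod s = u" "(m' * s + u') mod s = u'" using assms by auto
    ultimately show False using h assms(5) by metis
  qed
  have b1: "m * s + u < n * s"
  proof -
    have "m * s + u < m * s + s" using assms by simp
    also have "\<dots> = (m + 1) * s" by simp
    also have "\<dots> \<le> n * s" using assms by (intro mult_right_mono) auto
    finally show ?thesis .
  qed
  have b2: "m' * s + u' < n * s"
  proof -
    have "m' * s + u' < m' * s + s" using assms by simp
    also have "\<dots> = (m' + 1) * s" by simp
    also have "\<dots> \<le> n * s" using assms by (intro mult_right_mono) auto
    finally show ?thesis .
  qed
  have "n * s < p" using pbig unfolding s_def .
  then show ?thesis
  proof (intro not_dvd_small)
    have "int (m * s + u) \<noteq> int (m' * s + u')" using ne by (simp del: of_nat_add of_nat_mult)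
    then show "0 < \<bar>lam m u - lam m' u'\<bar>" unfolding lam_def by (simp del: of_nat_add of_nat_mult)
    have "int (m * s + u) < int p" "int (m' * s + u') < int p" using b1 b2 \<open>n * s < p\<close> by linarith+
    then show "\<bar>lam m u - lam m' u'\<bar> < P" unfolding lam_def P_def by (simp del: of_nat_add of_nat_mult)
  qed
qed


lemma finite_V[simp]: "finite V" unfolding V_def by (simp add: finite_PiE)
lemma finite_C[simp]: "finite C" unfolding C_def by simp
lemma card_V: "card V = p ^ card X" unfolding V_def P_def by (simp add: card_PiE)
lemma card_W: "card W = p ^ card Y" unfolding W_def P_def by (simp add: card_PiE)
lemma finite_W[simp]: "finite W" unfolding W_def by (simp add: finite_PiE)

lemma par_W: "w \<in> V \<Longrightarrow> par w \<in> W"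
  unfolding par_def W_def using P_gt by (auto simp: PiE_iff)

lemma card_count: "card V \<le> card C * card W"
proof -
  define F where "F v = {w\<in>V. par w = v}" for v
  have fib: "card (F v) \<le> card C" if v: "v \<in> par ` V" for v
  proof -
    obtain w0 where w0: "w0 \<in> V" "par w0 = v" using v by auto
    define g where "g w = (\<lambda>x\<in>X. (w x - w0 x) mod P)" for w
    have inj: "inj_on g (F v)"
    proof (rule inj_onI)
      fix w w' assume w: "w \<in> F v" "w' \<in> F v" "g w = g w'"
      show "w = w'"
      proof (rule PiE_ext)
        show "w \<in> PiE X (\<lambda>_. {0..<P})" "w' \<in> PiE X (\<lambda>_. {0..<P})"
          using w unfolding F_def V_def by auto
        fix x assume x: "x \<in> X"
        have "g w x = g w' x" using w by simp
        then have "(w x - w0 x) mod P = (w' x - w0 x) mod P" using x unfolding g_def by simp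
        moreover have "w x \<in> {0..<P}" "w' x \<in> {0..<P}" using w x unfolding F_def V_def by auto
        ultimately show "w x = w' x" using mod_eq_range by blast
      qed
    qed
    have sub: "g ` F v \<subseteq> C"
    proof
      fix z assume "z \<in> g ` F v"
      then obtain w where w: "w \<in> V" "par w = par w0" "z = g w" unfolding F_def using w0 by auto
      have "z \<in> V" unfolding w(3) g_def V_def using P_gt by (auto simp: PiE_iff)
      moreover have "P dvd (\<Sum>m\<in>R. lam m (a m)^t * z (R,m,c,a))" if y: "(R,t,c,a) \<in> Y" for R t c a
      proof -
        have "par w (R,t,c,a) = par w0 (R,t,c,a)" using w by simp
        then have eq: "(\<Sum>m\<in>R. lam m (a m)^t * w (R,m,c,a)) mod P = (\<Sum>m\<in>R. lam m (a m)^t * w0 (R,m,c,a)) mod P"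
          using y unfolding par_def by simp
        have "(\<Sum>m\<in>R. lam m (a m)^t * z (R,m,c,a)) = (\<Sum>m\<in>R. lam m (a m)^t * ((w (R,m,c,a) - w0 (R,m,c,a)) mod P))"
        proof (intro sum.cong refl)
          fix m assume "m \<in> R"
          then have "(R,m,c,a) \<in> X" using y unfolding X_def Y_def by auto
          then show "lam m (a m)^t * z (R,m,c,a) = lam m (a m)^t * ((w (R,m,c,a) - w0 (R,m,c,a)) mod P)"
            unfolding w(3) g_def by simp
        qed
        also have "P dvd \<dots>" using dvd_lin_mod[OF eq] .
        finally show ?thesis .
      qed
      ultimately show "z \<in> C" unfolding C_def by blast
    qed
    show ?thesis using card_inj_on_le[OF inj sub] by simp
  qed
  have "V = (\<Union>v\<in>par ` V. F v)" unfolding F_def by auto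
  then have "card V \<le> (\<Sum>v\<in>par ` V. card (F v))" using card_UN_le[of "par ` V" F] by simp
  also have "\<dots> \<le> (\<Sum>v\<in>par ` V. card C)" using fib by (intro sum_mono) auto
  also have "\<dots> = card (par ` V) * card C" by simp
  also have "\<dots> \<le> card W * card C"
    using par_W by (intro mult_right_mono card_mono) auto
  finally show ?thesis by (simp add: mult.commute)
qed

lemma C_V: "w \<in> C \<Longrightarrow> w \<in> V" unfolding C_def by simp

lemma C_dvd_diff:
  assumes "w \<in> C" "w' \<in> C" "(R,t,c,a) \<in> Y"
  shows "P dvd (\<Sum>m\<in>R. lam m (a m)^t * (w (R,m,c,a) - w' (R,m,c,a)))"
proof -
  have "P dvd (\<Sum>m\<in>R. lam m (a m)^t * w (R,m,c,a)) - (\<Sum>m\<in>R. lam m (a m)^t * w' (R,m,c,a))"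
    using assms unfolding C_def by (intro dvd_diff) auto
  also have "\<dots> = (\<Sum>m\<in>R. lam m (a m)^t * (w (R,m,c,a) - w' (R,m,c,a)))"
    by (simp add: right_diff_distrib sum_subtractf)
  finally show ?thesis .
qed

lemma V_range: "w \<in> V \<Longrightarrow> x \<in> X \<Longrightarrow> w x \<in> {0..<P}"
  unfolding V_def by auto

lemma recon:
  assumes w: "w \<in> C" "w' \<in> C" and K: "K \<subseteq> {..<n}" "card K = k"
    and agree: "\<And>m x. m \<in> K \<Longrightarrow> x \<in> Xn m \<Longrightarrow> w x = w' x"
  shows "w = w'"
proof (rule PiE_ext)
  show "w \<in> PiE X (\<lambda>_. {0..<P})" "w' \<in> PiE X (\<lambda>_. {0..<P})"
    using w C_V unfolding V_def by auto
  fix x assume x: "x \<in> X"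
  then obtain R m c a where xe: "x = (R,m,c,a)" and R: "R \<in> LL" and m: "m \<in> R" and c: "c < M"
    and a: "a \<in> AA R" unfolding X_def by auto
  show "w x = w' x"
  proof (cases "m \<in> K")
    case True
    then show ?thesis using agree[of m x] xe R m c a unfolding Xn_def by auto
  next
    case False
    have finR: "finite R" using LL_fin R .
    have cardI: "card (R - K) \<le> T"
    proof -
      have "card (R - K) \<le> card ({..<n} - K)" using LL_sub[OF R] by (intro card_mono) auto
      also have "\<dots> = n - k" using K by (simp add: card_Diff_subset finite_subset)
      finally show ?thesis unfolding T_def .
    qed
    have "P dvd (w (R,m,c,a) - w' (R,m,c,a))"
    proof (rule vdm[where I="R - K" and T=T and g="\<lambda>m. lam m (a m)" and z="\<lambda>m. w (R,m,c,a) - w' (R,m,c,a)"])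
      show "prime P" using pp unfolding P_def by simp
      show "finite (R - K)" using finR by simp
      show "card (R - K) \<le> T" by (rule cardI)
      show "m \<in> R - K" using m False by simp
      fix i i' assume ii: "i \<in> R - K" "i' \<in> R - K" "i \<noteq> i'"
      show "\<not> P dvd (lam i (a i) - lam i' (a i'))"
        using ii LL_sub[OF R] a unfolding AA_def by (intro lam_dist) auto
    next
      fix t assume t: "t < T"
      have y: "(R,t,c,a) \<in> Y" using R t c a unfolding Y_def by auto
      have "P dvd (\<Sum>m\<in>R. lam m (a m)^t * (w (R,m,c,a) - w' (R,m,c,a)))"
        by (rule C_dvd_diff[OF w y])
      also have "(\<Sum>m\<in>R. lam m (a m)^t * (w (R,m,c,a) - w' (R,m,c,a))) =
         (\<Sum>m\<in>R - K. lam m (a m)^t * (w (R,m,c,a) - w' (R,m,c,a)))"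
      proof (rule sum.mono_neutral_right)
        show "finite R" by (rule finR)
        show "R - K \<subseteq> R" by auto
        show "\<forall>i\<in>R - (R - K). lam i (a i) ^ t * (w (R, i, c, a) - w' (R, i, c, a)) = 0"
        proof
          fix i assume "i \<in> R - (R - K)"
          then have "i \<in> K" "(R,i,c,a) \<in> Xn i" using R c a unfolding Xn_def by auto
          then show "lam i (a i) ^ t * (w (R, i, c, a) - w' (R, i, c, a)) = 0" using agree by simp
        qed
      qed
      finally show "P dvd (\<Sum>m\<in>R - K. lam m (a m)^t * (w (R,m,c,a) - w' (R,m,c,a)))" .
    qed
    then have "P dvd (w x - w' x)" using xe by simp
    moreover have "w x \<in> {0..<P}" "w' x \<in> {0..<P}" using V_range C_V w x by auto
    ultimately show ?thesis using eq_of_dvd by blast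
  qed
qed

definition SelS :: "nat set \<Rightarrow> nat set \<Rightarrow> nat \<Rightarrow> nat set" where
  "SelS H R c = {h\<in>R\<inter>H. (rk (R\<inter>H) h + c) mod card (R\<inter>H) < dd}"

definition Dom :: "nat \<Rightarrow> nat set \<Rightarrow> nat \<Rightarrow> (nat set \<times> nat \<times> (nat \<Rightarrow> nat)) set" where
  "Dom j H h = Sigma {R\<in>LL. j\<in>R \<and> h\<in>R} (\<lambda>R. {c\<in>{..<M}. h \<in> SelS H R c} \<times> AA (R - {j}))"

lemma xR_ge:
  assumes j: "j < n" and H: "H \<subseteq> {..<n} - {j}" "card H = d" and R: "R \<in> LL" "j \<in> R"
  shows "dd \<le> card (R \<inter> H)"
proof -
  have finR: "finite R" using LL_fin R by simp
  have "R - {j} \<subseteq> (R \<inter> H) \<union> (({..<n} - {j}) - H)" using LL_sub[OF R(1)] by auto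
  then have "card (R - {j}) \<le> card ((R \<inter> H) \<union> (({..<n} - {j}) - H))"
    using finR by (intro card_mono) auto
  also have "\<dots> \<le> card (R \<inter> H) + card (({..<n} - {j}) - H)" by (rule card_Un_le)
  also have "card (({..<n} - {j}) - H) = (n - 1) - d"
    using H j by (subst card_Diff_subset) (auto simp: finite_subset)
  finally have "r - 1 \<le> card (R \<inter> H) + (n - 1 - d)"
    using LL_card[OF R(1)] R(2) finR by simp
  then show ?thesis using k0 kd dn i1 ik unfolding r_def dd_def by linarith
qed

lemma card_SelS:
  assumes j: "j < n" and H: "H \<subseteq> {..<n} - {j}" "card H = d" and R: "R \<in> LL" "j \<in> R"
  shows "card (SelS H R c) = dd"
proof -
  have ge: "dd \<le> card (R \<inter> H)" by (rule xR_ge[OF assms])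
  have fin: "finite (R \<inter> H)" using LL_fin R by simp
  have ne: "R \<inter> H \<noteq> {}" using ge nums(5) by auto
  show ?thesis unfolding SelS_def using card_rk_window[OF fin ne ge] by simp
qed

lemma AA_upd:
  assumes "a' \<in> AA (R - {j})" "u < s" "j \<in> R" shows "a'(j := u) \<in> AA R"
  using assms unfolding AA_def PiE_def extensional_def by auto

lemma AA_restr:
  assumes "a \<in> AA R" shows "a(j := undefined) \<in> AA (R - {j})"
  using assms unfolding AA_def PiE_def extensional_def by auto

lemma repair:
  assumes j: "j < n" and H: "H \<subseteq> {..<n} - {j}" "card H = d"
    and w: "w \<in> C" "w' \<in> C"
    and msg: "\<And>h R c a'. h \<in> H \<Longrightarrow> (R,c,a') \<in> Dom j H h \<Longrightarrow>
                 P dvd (\<Sum>u<s. w (R,h,c,a'(j:=u)) - w' (R,h,c,a'(j:=u)))"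
    and x: "x \<in> Xn j"
  shows "w x = w' x"
proof -
  obtain R c a where xe: "x = (R,j,c,a)" and R: "R \<in> LL" "j \<in> R" and c: "c < M" and a: "a \<in> AA R"
    using x unfolding Xn_def by auto
  define a' where "a' = a(j := undefined)"
  have a': "a' \<in> AA (R - {j})" unfolding a'_def by (rule AA_restr[OF a])
  have aa: "a'(j := a j) = a" unfolding a'_def by simp
  have aj: "a j < s" using a R unfolding AA_def by auto
  have finR: "finite R" using LL_fin R by simp
  define S where "S = SelS H R c"
  have Ssub: "S \<subseteq> R - {j}" unfolding S_def SelS_def using H by auto
  have cardS: "card S = dd" unfolding S_def by (rule card_SelS[OF j H R])
  define D where "D m u = w (R,m,c,a'(j:=u)) - w' (R,m,c,a'(j:=u))" for m u
  define I :: "(nat + nat) set" where "I = Inl ` {..<s} \<union> Inr ` (R - {j} - S)"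
  define g where "g v = (case v of Inl u \<Rightarrow> lam j u | Inr m \<Rightarrow> lam m (a' m))" for v
  define z where "z v = (case v of Inl u \<Rightarrow> D j u | Inr m \<Rightarrow> (\<Sum>u<s. D m u))" for v
  have cardI: "card I = T"
  proof -
    have "card I = card (Inl ` {..<s} :: (nat + nat) set) + card (Inr ` (R - {j} - S) :: (nat + nat) set)"
      unfolding I_def using finR by (intro card_Un_disjoint) auto
    also have "\<dots> = s + card (R - {j} - S)" by (simp add: card_image)
    also have "card (R - {j} - S) = (r - 1) - dd"
      using Ssub cardS finR LL_card[OF R(1)] R(2) by (simp add: card_Diff_subset finite_subset)
    finally show ?thesis using nums by simp
  qed
  have mS: "P dvd (\<Sum>u<s. D m u)" if "m \<in> S" for m
  proof -
    have mH: "m \<in> H" "m \<in> R" using that unfolding S_def SelS_def by auto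
    have "(R,c,a') \<in> Dom j H m" unfolding Dom_def using R c a' mH that S_def by auto
    then show ?thesis using msg[OF mH(1)] unfolding D_def by simp
  qed
  have "P dvd z (Inl (a j))"
  proof (rule vdm[where I=I and T=T and g=g])
    show "prime P" using pp unfolding P_def by simp
    show "finite I" unfolding I_def using finR by simp
    show "card I \<le> T" using cardI by simp
    show "Inl (a j) \<in> I" unfolding I_def using aj by auto
  next
    fix v v' assume vv: "v \<in> I" "v' \<in> I" "v \<noteq> v'"
    have Rn: "R \<subseteq> {..<n}" using LL_sub[OF R(1)] .
    have a's: "m \<in> R - {j} \<Longrightarrow> a' m < s" for m using a' unfolding AA_def by auto
    define \<kappa> where "\<kappa> v = (case v of Inl u \<Rightarrow> (j,u) | Inr m \<Rightarrow> (m, a' m))" for v :: "nat + nat"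
    have kv: "fst (\<kappa> v) < n \<and> snd (\<kappa> v) < s \<and> g v = lam (fst (\<kappa> v)) (snd (\<kappa> v))"
      if "v \<in> I" for v
      using that Rn a's j unfolding I_def \<kappa>_def g_def by auto
    have "\<kappa> v \<noteq> \<kappa> v'" using vv unfolding I_def \<kappa>_def by auto
    then have "(fst (\<kappa> v), snd (\<kappa> v)) \<noteq> (fst (\<kappa> v'), snd (\<kappa> v'))" by simp
    then show "\<not> P dvd (g v - g v')"
      using kv[OF vv(1)] kv[OF vv(2)] lam_dist by metis
  next
    fix t assume t: "t < T"
    have yu: "(R,t,c,a'(j:=u)) \<in> Y" if "u < s" for u
      using R t c AA_upd[OF a' that R(2)] unfolding Y_def by auto
    have "P dvd (\<Sum>u<s. \<Sum>m\<in>R. lam m ((a'(j:=u)) m)^t * D m u)"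
      unfolding D_def
    proof (rule dvd_sum)
      fix u assume "u \<in> {..<s}"
      then show "P dvd (\<Sum>m\<in>R. lam m ((a'(j:=u)) m)^t * (w (R,m,c,a'(j:=u)) - w' (R,m,c,a'(j:=u))))"
        using C_dvd_diff[OF w yu[of u]] by simp
    qed
    also have "(\<Sum>u<s. \<Sum>m\<in>R. lam m ((a'(j:=u)) m)^t * D m u) =
       (\<Sum>m\<in>R. \<Sum>u<s. lam m ((a'(j:=u)) m)^t * D m u)" by (rule sum.swap)
    also have "\<dots> = (\<Sum>u<s. lam j u ^t * D j u) + (\<Sum>m\<in>R - {j}. \<Sum>u<s. lam m ((a'(j:=u)) m)^t * D m u)"
      using finR R(2) by (simp add: sum.remove)
    also have "(\<Sum>m\<in>R - {j}. \<Sum>u<s. lam m ((a'(j:=u)) m)^t * D m u) =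
        (\<Sum>m\<in>R - {j}. lam m (a' m)^t * (\<Sum>u<s. D m u))"
      by (intro sum.cong refl) (auto simp: sum_distrib_left)
    also have "\<dots> = (\<Sum>m\<in>S. lam m (a' m)^t * (\<Sum>u<s. D m u)) + (\<Sum>m\<in>R - {j} - S. lam m (a' m)^t * (\<Sum>u<s. D m u))"
      using finR Ssub by (subst sum.subset_diff[of S "R - {j}"]) auto
    finally have h1: "P dvd (\<Sum>u<s. lam j u ^t * D j u) + (\<Sum>m\<in>S. lam m (a' m)^t * (\<Sum>u<s. D m u)) +
         (\<Sum>m\<in>R - {j} - S. lam m (a' m)^t * (\<Sum>u<s. D m u))" by (simp add: add.assoc)
    have h2: "P dvd (\<Sum>m\<in>S. lam m (a' m)^t * (\<Sum>u<s. D m u))"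
      using mS by (intro dvd_sum) (simp add: dvd_mult)
    have h3: "P dvd (\<Sum>u<s. lam j u ^t * D j u) + (\<Sum>m\<in>R - {j} - S. lam m (a' m)^t * (\<Sum>u<s. D m u))"
      using dvd_diff[OF h1 h2] by (simp add: algebra_simps)
    have "(\<Sum>v\<in>I. g v ^ t * z v) = (\<Sum>v\<in>Inl ` {..<s}. g v ^ t * z v) + (\<Sum>v\<in>Inr ` (R - {j} - S). g v ^ t * z v)"
      unfolding I_def using finR by (intro sum.union_disjoint) auto
    also have "(\<Sum>v\<in>Inl ` {..<s}. g v ^ t * z v) = (\<Sum>u<s. lam j u ^t * D j u)"
      by (subst sum.reindex) (auto simp: g_def z_def)
    also have "(\<Sum>v\<in>Inr ` (R - {j} - S). g v ^ t * z v) = (\<Sum>m\<in>R - {j} - S. lam m (a' m)^t * (\<Sum>u<s. D m u))"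
      by (subst sum.reindex) (auto simp: g_def z_def)
    finally show "P dvd (\<Sum>v\<in>I. g v ^ t * z v)" using h3 by simp
  qed
  then have "P dvd (w x - w' x)" unfolding z_def D_def xe by (simp only: aa sum.case)
  moreover have "x \<in> X" using x R c a unfolding xe X_def by auto
  then have "w x \<in> {0..<P}" "w' x \<in> {0..<P}" using V_range C_V w by auto
  ultimately show ?thesis using eq_of_dvd by blast
qed

definition "L0 = card {R\<in>LL. 0\<in>R}"

lemma Lj: "j < n \<Longrightarrow> card {R\<in>LL. j\<in>R} = L0"
proof -
  assume j: "j < n"
  have "(\<Sum>R\<in>{R\<in>Lay n r. j\<in>R}. (1::real)) = (\<Sum>R\<in>{R\<in>Lay n r. 0\<in>R}. 1)"
    using j dn by (intro sym_sum) auto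
  then show ?thesis unfolding L0_def LL_def by simp
qed

lemma LL_count: "card LL * r = n * L0"
proof -
  have "(\<Sum>j\<in>{..<n}. \<Sum>R\<in>{R\<in>LL. j\<in>R}. (1::real)) = (\<Sum>R\<in>LL. real (card (R \<inter> {..<n})) * 1)"
    by (rule double_count) auto
  also have "\<dots> = (\<Sum>R\<in>LL. real r)"
    using LL_sub LL_card by (intro sum.cong refl) (simp add: Int_absorb2)
  finally have "(\<Sum>j\<in>{..<n}. real (card {R\<in>LL. j\<in>R})) = real (card LL) * real r" by simp
  also have "(\<Sum>j\<in>{..<n}. real (card {R\<in>LL. j\<in>R})) = (\<Sum>j\<in>{..<n}. real L0)"
    using Lj by (intro sum.cong) auto
  finally have "real (card LL * r) = real (n * L0)" by simp
  then show ?thesis by (simp only: of_nat_eq_iff)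
qed

lemma L0_pos: "0 < L0"
proof -
  have "{..<r} \<in> {R\<in>LL. 0\<in>R}" using nums unfolding LL_def Lay_def by auto
  then show ?thesis unfolding L0_def by (intro card_gt_0_iff[THEN iffD2]) (auto intro: finite_subset)
qed

lemma card_sel_c:
  assumes j: "j < n" and H: "H \<subseteq> {..<n} - {j}" "card H = d" and R: "R \<in> LL" "j \<in> R" "h \<in> R" "h \<in> H"
  shows "real (card {c\<in>{..<M}. h \<in> SelS H R c}) = real M * real dd / real (card (R \<inter> H))"
proof -
  define x where "x = card (R \<inter> H)"
  have ge: "dd \<le> x" unfolding x_def by (rule xR_ge[OF j H R(1,2)])
  have x0: "0 < x" using ge nums by linarith
  have xn: "x \<le> n" unfolding x_def using LL_sub[OF R(1)] by (intro card_mono[of "{..<n}", simplified]) auto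
  have dv: "x dvd M" unfolding M_def using x0 xn by (simp add: dvd_fact)
  then obtain q where q: "M = x * q" by auto
  have "{c\<in>{..<M}. h \<in> SelS H R c} = {c\<in>{..<x*q}. (rk (R\<inter>H) h + c) mod x < dd}"
    using R unfolding SelS_def x_def q by auto
  then have "card {c\<in>{..<M}. h \<in> SelS H R c} = q * dd" using card_window[OF x0 ge] by simp
  then show ?thesis unfolding x_def[symmetric] using q x0 by (simp add: field_simps)
qed

definition "wgt j H R = (if j \<in> R then 1 / real (card (R \<inter> H)) else 0)"

lemma card_Dom:
  assumes j: "j < n" and H: "H \<subseteq> {..<n} - {j}" "card H = d" and h: "h \<in> H"
  shows "real (card (Dom j H h)) = real M * real dd * real s ^ (r - 1) * (\<Sum>R\<in>{R\<in>LL. h\<in>R}. wgt j H R)"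
proof -
  have "card (Dom j H h) = (\<Sum>R\<in>{R\<in>LL. j\<in>R \<and> h\<in>R}. card ({c\<in>{..<M}. h \<in> SelS H R c} \<times> AA (R - {j})))"
    unfolding Dom_def using LL_fin by (intro card_SigmaI) auto
  then have "real (card (Dom j H h)) = (\<Sum>R\<in>{R\<in>LL. j\<in>R \<and> h\<in>R}. real (card {c\<in>{..<M}. h \<in> SelS H R c}) * real s ^ (r - 1))"
    using LL_fin LL_card by (simp add: card_cartesian_product card_AA)
  also have "\<dots> = (\<Sum>R\<in>{R\<in>LL. j\<in>R \<and> h\<in>R}. real M * real dd * real s ^ (r - 1) * (1 / real (card (R \<inter> H))))"
    using card_sel_c[OF j H] h by (intro sum.cong refl) auto
  also have "\<dots> = real M * real dd * real s ^ (r - 1) * (\<Sum>R\<in>{R\<in>LL. j\<in>R \<and> h\<in>R}. 1 / real (card (R \<inter> H)))"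
    by (simp add: sum_distrib_left)
  also have "(\<Sum>R\<in>{R\<in>LL. j\<in>R \<and> h\<in>R}. 1 / real (card (R \<inter> H))) = (\<Sum>R\<in>{R\<in>LL. h\<in>R}. wgt j H R)"
    unfolding wgt_def by (rule sum.mono_neutral_cong_left) auto
  finally show ?thesis .
qed

lemma Phi_const:
  assumes j: "j < n" and H: "H \<subseteq> {..<n} - {j}" "card H = d" and h: "h \<in> H" and h': "h' \<in> H"
  shows "(\<Sum>R\<in>{R\<in>LL. h\<in>R}. wgt j H R) = (\<Sum>R\<in>{R\<in>LL. h'\<in>R}. wgt j H R)"
  unfolding LL_def
proof (rule sym_sum)
  show "h < n" "h' < n" using H h h' by auto
  fix R assume R: "R \<in> Lay n r"
  have trH: "tr h h' ` H = H"
  proof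
    show "tr h h' ` H \<subseteq> H" using h h' by (auto simp: tr_def)
    show "H \<subseteq> tr h h' ` H"
    proof
      fix y assume "y \<in> H"
      moreover have "tr h h' y \<in> H" using \<open>y \<in> H\<close> h h' by (auto simp: tr_def)
      ultimately show "y \<in> tr h h' ` H" by (metis image_eqI tr_tr)
    qed
  qed
  have jj: "tr h h' j = j" using H h h' by (auto simp: tr_def)
  have inj: "inj (tr h h')" by (rule inj_tr)
  have "j \<in> tr h h' ` R \<longleftrightarrow> j \<in> R"
    by (metis jj inj image_iff inj_image_mem_iff)
  moreover have "card (tr h h' ` R \<inter> H) = card (R \<inter> H)"
  proof -
    have "tr h h' ` R \<inter> H = tr h h' ` (R \<inter> H)"
      by (metis trH image_Int inj)
    also have "card \<dots> = card (R \<inter> H)" by (rule card_image[OF inj_on_subset[OF inj subset_UNIV]])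
    finally show ?thesis .
  qed
  ultimately show "wgt j H (tr h h' ` R) = wgt j H R" unfolding wgt_def by simp
qed

lemma Phi_val:
  assumes j: "j < n" and H: "H \<subseteq> {..<n} - {j}" "card H = d" and h: "h \<in> H"
  shows "real d * (\<Sum>R\<in>{R\<in>LL. h\<in>R}. wgt j H R) = real L0"
proof -
  have finH: "finite H" using H by (auto intro: finite_subset)
  have "(\<Sum>h'\<in>H. \<Sum>R\<in>{R\<in>LL. h'\<in>R}. wgt j H R) = (\<Sum>h'\<in>H. \<Sum>R\<in>{R\<in>LL. h\<in>R}. wgt j H R)"
    by (rule sum.cong[OF refl], rule Phi_const[OF j H _ h])
  also have "\<dots> = real d * (\<Sum>R\<in>{R\<in>LL. h\<in>R}. wgt j H R)" using H by simp
  finally have e1: "real d * (\<Sum>R\<in>{R\<in>LL. h\<in>R}. wgt j H R) = (\<Sum>h'\<in>H. \<Sum>R\<in>{R\<in>LL. h'\<in>R}. wgt j H R)" ..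
  also have "\<dots> = (\<Sum>R\<in>LL. real (card (R \<inter> H)) * wgt j H R)"
    by (rule double_count[OF finH]) simp
  also have "\<dots> = (\<Sum>R\<in>LL. if j \<in> R then 1 else 0)"
  proof (intro sum.cong refl)
    fix R assume R: "R \<in> LL"
    show "real (card (R \<inter> H)) * wgt j H R = (if j \<in> R then 1 else 0)"
    proof (cases "j \<in> R")
      case True
      have "dd \<le> card (R \<inter> H)" by (rule xR_ge[OF j H R True])
      then have "card (R \<inter> H) > 0" using nums by linarith
      then show ?thesis using True unfolding wgt_def by simp
    qed (simp add: wgt_def)
  qed
  also have "\<dots> = real (card {R\<in>LL. j\<in>R})" by (simp add: sum.If_cases Int_def)
  also have "\<dots> = real L0" using Lj[OF j] by simp
  finally show ?thesis .
qed

lemma card_Dom_val: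
  assumes j: "j < n" and H: "H \<subseteq> {..<n} - {j}" "card H = d" and h: "h \<in> H"
  shows "real (card (Dom j H h)) * real d * real s = real (L0 * M * s ^ r) * real dd"
proof -
  have "real (card (Dom j H h)) * real d * real s =
     real M * real dd * real s ^ (r - 1) * real s * (real d * (\<Sum>R\<in>{R\<in>LL. h\<in>R}. wgt j H R))"
    unfolding card_Dom[OF assms] by (simp add: algebra_simps)
  also have "\<dots> = real M * real dd * real s ^ (r - 1) * real s * real L0" using Phi_val[OF assms] by simp
  finally have e: "real (card (Dom j H h)) * real d * real s = real M * real dd * real s ^ (r - 1) * real s * real L0" .
  have "real s ^ (r - 1) * real s = real s ^ r" using nums(7)
    by (cases r) (auto simp: mult.commute)
  then show ?thesis unfolding e by (simp add: algebra_simps)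
qed

end



context lc begin

definition "NS j = PiE (Xn j) (\<lambda>_. {0..<P})"
definition "MS j H h = PiE (Dom j H h) (\<lambda>_. {0..<P})"
definition "msgf j H h v = (\<lambda>(R,c,a')\<in>Dom j H h. (\<Sum>u<s. v (R,h,c,a'(j:=u))) mod P)"
definition "phi j H h z = to_nat_on (MS j H h) (msgf j H h (from_nat_into (NS h) z))"

lemma finite_NS[simp]: "finite (NS j)" unfolding NS_def by (simp add: finite_PiE)
lemma finite_Dom[simp]: "finite (Dom j H h)"
  unfolding Dom_def using LL_fin by (intro finite_SigmaI) auto
lemma finite_MS[simp]: "finite (MS j H h)" unfolding MS_def by (simp add: finite_PiE)
lemma card_NS: "card (NS j) = p ^ card (Xn j)" unfolding NS_def P_def by (simp add: card_PiE)
lemma card_MS: "card (MS j H h) = p ^ card (Dom j H h)" unfolding MS_def P_def by (simp add: card_PiE)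

lemma msgf_MS: "msgf j H h v \<in> MS j H h"
  unfolding msgf_def MS_def using P_gt by (auto simp: PiE_iff)

lemma node_NS: "w \<in> C \<Longrightarrow> restrict w (Xn j) \<in> NS j"
  unfolding NS_def using C_V V_range by (auto simp: PiE_iff) (use Xn_def X_def in auto)

lemma powr_nat: "2 powr (real m * log 2 (real p)) = real p ^ m"
proof -
  have p0: "0 < real p" using P_gt unfolding P_def by simp
  have "2 powr (real m * log 2 (real p)) = (2 powr log 2 (real p)) powr real m"
    by (simp add: powr_powr mult.commute)
  also have "\<dots> = real p powr real m" using p0 by simp
  also have "\<dots> = real p ^ m" using p0 by (simp add: powr_realpow)
  finally show ?thesis .
qed

lemma exists_code:
  "\<exists>N f phi. N \<ge> 1 \<and> real p ^ (card LL * i * M * s ^ r) \<le> real N \<and>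
     exact_code n k d (real (L0 * M * s ^ r) * log 2 p)
        (real (L0 * M * s ^ r) * real dd / (real s * real d) * log 2 p) N f phi"
proof -
  define N where "N = card C"
  obtain e where e: "bij_betw e {0..<N} C" unfolding N_def using ex_bij_betw_nat_finite finite_C by blast
  define f where "f j x = to_nat_on (NS j) (restrict (e x) (Xn j))" for j x
  have eC: "x < N \<Longrightarrow> e x \<in> C" for x using e by (auto simp: bij_betw_def)
  have zC: "(\<lambda>x\<in>X. 0) \<in> C"
  proof -
    have "(\<lambda>x\<in>X. 0) \<in> V" unfolding V_def using P_gt by auto
    moreover have "P dvd (\<Sum>m\<in>R. lam m (a m)^t * (\<lambda>x\<in>X. 0) (R,m,c,a))" if "(R,t,c,a) \<in> Y" for R t c a
    proof -
      have "(\<Sum>m\<in>R. lam m (a m)^t * (\<lambda>x\<in>X. 0::int) (R,m,c,a)) = 0"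
        using that unfolding X_def Y_def by (intro sum.neutral) auto
      then show ?thesis by simp
    qed
    ultimately show ?thesis unfolding C_def by blast
  qed
  have N1: "N \<ge> 1" unfolding N_def using zC by (metis card_0_eq finite_C empty_iff less_one not_le)
  have cnt: "p ^ card X \<le> N * p ^ card Y" using card_count card_V card_W N_def by simp
  have XY: "card X = card Y + card LL * i * M * s ^ r"
    unfolding card_X card_Y using nums(1) by (simp add: algebra_simps flip: nums(1))
  have Nbig: "real p ^ (card LL * i * M * s ^ r) \<le> real N"
  proof -
    have "real p ^ card Y * real p ^ (card LL * i * M * s ^ r) \<le> real p ^ card Y * real N"
      using cnt unfolding XY power_add by (simp add: mult.commute flip: of_nat_power of_nat_mult)
    moreover have "0 < real p ^ card Y" using P_gt unfolding P_def by simp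
    ultimately show ?thesis by simp
  qed
  have ex: "exact_code n k d (real (L0 * M * s ^ r) * log 2 p)
        (real (L0 * M * s ^ r) * real dd / (real s * real d) * log 2 p) N f phi"
    unfolding exact_code_def
  proof (intro conjI allI impI ballI)
    fix j assume j: "j < n"
    have "f j ` {..<N} \<subseteq> to_nat_on (NS j) ` NS j"
      unfolding f_def using eC node_NS by auto
    then have "card (f j ` {..<N}) \<le> card (NS j)"
      by (meson card_image_le card_mono finite_NS finite_imageI order_trans)
    also have "\<dots> = p ^ (L0 * M * s ^ r)" unfolding card_NS card_Xn Lj[OF j] by (simp add: mult.assoc)
    finally show "real (card (f j ` {..<N})) \<le> 2 powr (real (L0 * M * s ^ r) * log 2 p)"
      unfolding powr_nat by (metis of_nat_le_iff of_nat_power)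
  next
    fix K x y assume K: "K \<subseteq> {..<n} \<and> card K = k" and xy: "x < N" "y < N" and
      ag: "\<forall>m\<in>K. f m x = f m y"
    have "e x = e y"
    proof (rule recon[OF eC[OF xy(1)] eC[OF xy(2)]])
      show "K \<subseteq> {..<n}" "card K = k" using K by auto
      fix m z assume m: "m \<in> K" and z: "z \<in> Xn m"
      have "restrict (e x) (Xn m) = restrict (e y) (Xn m)"
        using ag m node_NS eC xy unfolding f_def by (simp add: countable_finite)
      then show "e x z = e y z" using z by (metis restrict_apply')
    qed
    then show "x = y" using e xy by (auto simp: bij_betw_def inj_on_def)
  next
    fix j H h assume j: "j < n" and H: "H \<subseteq> {..<n} - {j} \<and> card H = d" and h: "h \<in> H"
    have "phi j H h ` f h ` {..<N} \<subseteq> to_nat_on (MS j H h) ` MS j H h"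
      unfolding phi_def using msgf_MS by auto
    then have "card (phi j H h ` f h ` {..<N}) \<le> card (MS j H h)"
      by (meson card_image_le card_mono finite_MS finite_imageI order_trans)
    also have "\<dots> = p ^ card (Dom j H h)" by (rule card_MS)
    finally have c1: "real (card (phi j H h ` f h ` {..<N})) \<le> real p ^ card (Dom j H h)"
      by (metis of_nat_le_iff of_nat_power)
    have "real (card (Dom j H h)) * real d * real s = real (L0 * M * s ^ r) * real dd"
      using card_Dom_val[OF j] H h by auto
    moreover have "0 < real d" "0 < real s" using nums k0 kd by auto
    ultimately have "real (card (Dom j H h)) = real (L0 * M * s ^ r) * real dd / (real s * real d)"
      by (simp add: field_simps)
    then show "real (card (phi j H h ` f h ` {..<N})) \<le> 2 powr (real (L0 * M * s ^ r) * real dd / (real s * real d) * log 2 p)"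
      using c1 powr_nat[of "card (Dom j H h)"] by simp
  next
    fix j H x y assume j: "j < n" and H: "H \<subseteq> {..<n} - {j} \<and> card H = d" and xy: "x < N" "y < N"
      and eqm: "\<forall>h\<in>H. phi j H h (f h x) = phi j H h (f h y)"
    have "\<forall>z\<in>Xn j. e x z = e y z"
    proof
      fix z assume z: "z \<in> Xn j"
      show "e x z = e y z"
      proof (rule repair[OF j _ _ eC[OF xy(1)] eC[OF xy(2)] _ z])
        show "H \<subseteq> {..<n} - {j}" "card H = d" using H by auto
        fix h R c a' assume h: "h \<in> H" and D: "(R,c,a') \<in> Dom j H h"
        have fx: "from_nat_into (NS h) (f h x) = restrict (e x) (Xn h)"
          unfolding f_def using node_NS eC xy by (simp add: countable_finite)
        have fy: "from_nat_into (NS h) (f h y) = restrict (e y) (Xn h)"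
          unfolding f_def using node_NS eC xy by (simp add: countable_finite)
        have "msgf j H h (restrict (e x) (Xn h)) = msgf j H h (restrict (e y) (Xn h))"
        proof -
          have "phi j H h (f h x) = phi j H h (f h y)" using eqm h by blast
          then have "msgf j H h (from_nat_into (NS h) (f h x)) = msgf j H h (from_nat_into (NS h) (f h y))"
            unfolding phi_def using msgf_MS by (simp add: countable_finite)
          then show ?thesis unfolding fx fy .
        qed
        then have "msgf j H h (restrict (e x) (Xn h)) (R,c,a') = msgf j H h (restrict (e y) (Xn h)) (R,c,a')"
          by simp
        moreover have "(R,h,c,a'(j:=u)) \<in> Xn h" if "u < s" for u
          using D that AA_upd unfolding Dom_def Xn_def by auto
        ultimately have "(\<Sum>u<s. e x (R,h,c,a'(j:=u))) mod P = (\<Sum>u<s. e y (R,h,c,a'(j:=u))) mod P"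
          using D unfolding msgf_def by simp
        then show "P dvd (\<Sum>u<s. e x (R,h,c,a'(j:=u)) - e y (R,h,c,a'(j:=u)))"
          by (simp add: sum_subtractf mod_eq_dvd_iff)
      qed
    qed
    then have "restrict (e x) (Xn j) = restrict (e y) (Xn j)" by (auto simp: restrict_def)
    then show "f j x = f j y" unfolding f_def by simp
  qed
  show ?thesis using N1 Nbig ex by blast
qed

end



lemma code_upper:
  assumes ex: "exact_code n k d A B N f phi" and kn: "k \<le> n"
  shows "real N \<le> 2 powr (real k * A)"
proof -
  define K where "K = {..<k}"
  have K: "K \<subseteq> {..<n}" "card K = k" "finite K" using kn unfolding K_def by auto
  define g where "g x = (\<lambda>m\<in>K. f m x)" for x
  have inj: "inj_on g {..<N}"
  proof (rule inj_onI)
    fix x y assume "x \<in> {..<N}" "y \<in> {..<N}" "g x = g y"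
    moreover have "\<forall>m\<in>K. f m x = f m y" using \<open>g x = g y\<close> unfolding g_def by (metis restrict_apply')
    ultimately show "x = y" using ex K unfolding exact_code_def by auto
  qed
  have sub: "g ` {..<N} \<subseteq> PiE K (\<lambda>m. f m ` {..<N})" unfolding g_def by auto
  have "N = card (g ` {..<N})" using inj by (simp add: card_image)
  also have "\<dots> \<le> card (PiE K (\<lambda>m. f m ` {..<N}))"
    using sub K by (intro card_mono) (auto simp: finite_PiE)
  also have "\<dots> = (\<Prod>m\<in>K. card (f m ` {..<N}))" using K by (simp add: card_PiE)
  finally have "real N \<le> (\<Prod>m\<in>K. real (card (f m ` {..<N})))" by (metis of_nat_le_iff of_nat_prod)
  also have "\<dots> \<le> (\<Prod>m\<in>K. 2 powr A)"
    using ex K unfolding exact_code_def by (intro prod_mono) auto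
  also have "\<dots> = (2 powr A) ^ k" using K by simp
  also have "\<dots> = 2 powr (real k * A)" by (simp add: powr_realpow[symmetric] powr_powr mult.commute)
  finally show ?thesis .
qed

theorem theorem3p2:
  fixes n k d i :: nat and alpha :: real
  assumes "0 < k" "k \<le> d" "d < n" "0 < alpha" "1 \<le> i" "i \<le> k"
  shows "C_exact n k d alpha ((real d - real k + real i) * alpha / (real d - real k + 1))
           \<ge> real n * real i * alpha / (real n - real k + real i)"
proof -
  obtain p where pp: "prime p" "n * (d - k + 1) < p" using bigger_prime by blast
  interpret lc n k d i p using assms pp by unfold_locales auto
  define gamma where "gamma = (real d - real k + real i) * alpha / (real d - real k + 1)"
  have sR: "real s = real d - real k + 1" "real dd = real d - real k + real i"
    "real r = real n - real k + real i"
    using assms unfolding s_def dd_def r_def by auto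
  have gam: "gamma = real dd * alpha / real s" unfolding gamma_def sR ..
  have d0: "0 < real d" and s0: "0 < real s" using assms nums by auto
  define S where "S t = {log 2 (real N) | N f phi. N \<ge> 1 \<and> exact_code n k d (t * alpha) (t * gamma / real d) N f phi}" for t
  have gam0: "0 \<le> gamma" unfolding gam using s0 assms by simp
  have Sne: "S t \<noteq> {}" if t: "0 < t" for t
  proof -
    have "exact_code n k d (t * alpha) (t * gamma / real d) 1 (\<lambda>_ _. 0) (\<lambda>_ _ _ _. 0)"
      unfolding exact_code_def using t assms gam0 d0 by (auto intro!: ge_one_powr_ge_zero)
    then show ?thesis unfolding S_def by blast
  qed
  have Sub: "z \<le> real k * (t * alpha)" if zS: "z \<in> S t" for z t
  proof -
    obtain N f phi where N: "z = log 2 (real N)" "N \<ge> 1" "exact_code n k d (t * alpha) (t * gamma / real d) N f phi"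
      using zS unfolding S_def by blast
    have "real N \<le> 2 powr (real k * (t * alpha))" using code_upper[OF N(3)] assms by simp
    then have "log 2 (real N) \<le> log 2 (2 powr (real k * (t * alpha)))" using N(2) by (subst log_le_cancel_iff) auto
    then show ?thesis using N(1) by simp
  qed
  have bdd: "bdd_above ((\<lambda>t. Sup (S t) / t) ` {0<..})"
  proof (rule bdd_aboveI2)
    fix t :: real assume t: "t \<in> {0<..}"
    have "Sup (S t) \<le> real k * (t * alpha)" using Sne t Sub by (intro cSup_least) auto
    then show "Sup (S t) / t \<le> real k * alpha" using t by (simp add: divide_le_eq mult.commute mult.left_commute)
  qed
  obtain N f phi where N: "N \<ge> 1" "real p ^ (card LL * i * M * s ^ r) \<le> real N"
    "exact_code n k d (real (L0 * M * s ^ r) * log 2 p) (real (L0 * M * s ^ r) * real dd / (real s * real d) * log 2 p) N f phi"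
    using exists_code by blast
  have p2: "1 < real p" using P_gt unfolding P_def by simp
  have lp: "0 < log 2 (real p)" using p2 by simp
  have aS: "0 < real (L0 * M * s ^ r)" using L0_pos nums unfolding M_def by simp
  define t0 where "t0 = real (L0 * M * s ^ r) * log 2 p / alpha"
  have t0: "0 < t0" unfolding t0_def using aS lp assms by simp
  have e1: "t0 * alpha = real (L0 * M * s ^ r) * log 2 p" unfolding t0_def using assms by simp
  have e2: "t0 * gamma / real d = real (L0 * M * s ^ r) * real dd / (real s * real d) * log 2 p"
    unfolding t0_def gam using assms by (simp add: field_simps)
  have inS: "log 2 (real N) \<in> S t0" unfolding S_def e1 e2 using N by blast
  have bddS: "bdd_above (S t0)" using Sub by (intro bdd_aboveI) blast
  have "log 2 (real p ^ (card LL * i * M * s ^ r)) \<le> log 2 (real N)"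
    using N p2 by (subst log_le_cancel_iff) auto
  then have lN: "real (card LL * i * M * s ^ r) * log 2 p \<le> log 2 (real N)"
    using p2 by (simp add: log_nat_power)
  have "real n * real i * alpha / (real n - real k + real i) = real (card LL * i * M * s ^ r) * log 2 p / t0"
  proof -
    have cnt: "real (card LL) * real r = real n * real L0" using LL_count by (metis of_nat_mult)
    have r0: "0 < real r" using nums by simp
    define Q where "Q = real M * real s ^ r"
    have Q0: "Q \<noteq> 0" unfolding Q_def M_def using nums(4) by simp
    have L00: "real L0 \<noteq> 0" using L0_pos by simp
    have q1: "real (card LL * i * M * s ^ r) = real (card LL) * real i * Q" unfolding Q_def by simp
    have q2: "real (L0 * M * s ^ r) = real L0 * Q" unfolding Q_def by simp
    have "real (card LL * i * M * s ^ r) * log 2 p / t0 = real (card LL) * real i * alpha / real L0"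
      unfolding t0_def q1 q2 using Q0 L00 lp assms by (simp add: field_simps)
    also have "\<dots> = real n * real i * alpha / real r"
      using cnt r0 L0_pos by (simp add: field_simps)
    finally show ?thesis unfolding sR by simp
  qed
  also have "\<dots> \<le> log 2 (real N) / t0" using lN t0 by (simp add: divide_right_mono)
  also have "\<dots> \<le> Sup (S t0) / t0" using cSup_upper[OF inS bddS] t0 by (simp add: divide_right_mono)
  also have "\<dots> \<le> (SUP t\<in>{0<..}. Sup (S t) / t)" using t0 bdd by (intro cSUP_upper) auto
  also have "\<dots> = C_exact n k d alpha gamma" unfolding C_exact_def S_def by simp
  finally show ?thesis unfolding gamma_def .
qed


end
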